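(* Let $U=(U_{ij})_{i,j=1}^M$, $U_{ij}\in M_M(\mathbb C)$, and $V=(V_{ab})_{a,b=1}^N$, $V_{ab}\in M_N(\mathbb C)$, be projective models, $Q\in M_{M\times N}(\mathbb T)$, and $W=U\otimes_QV$. Then for all $p,r\geq1$, $$c_p^r(W)=\frac{1}{(MN)^r}\sum_{i,b}\Delta_U(i)\,\Delta_{V'}(b^t)\prod_{t=1}^r\prod_{s=1}^p\frac{Q_{i_s^tb_s^t}\,Q_{i_s^{t+1}b_{s+1}^t}}{Q_{i_s^tb_{s+1}^t}\,Q_{i_s^{t+1}b_s^t}},$$ where the sum is over $i=(i_s^t)\in M_{r\times p}(\{1,\dots,M\})$ and $b=(b_s^t)\in M_{r\times p}(\{1,\dots,N\})$ ($t$ = row index, $s$ = column index), the upper indices are taken modulo $r$ and lower indices modulo $p$ (so $i^{r+1}=i^1$, $b_{p+1}=b_1$), $$\Delta_U(i)=M^r\,(T_p^U)_{i_1^1\dots i_p^1,\,i_1^2\dots i_p^2}(T_p^U)_{i_1^2\dots i_p^2,\,i_1^3\dots i_p^3}\cdots(T_p^U)_{i_1^r\dots i_p^r,\,i_1^1\dots i_p^1},$$ and similarly $\Delta_{V'}(b^t)=N^p\,(T_r^{V'})_{b_1^1\dots b_1^r,\,b_2^1\dots b_2^r}\cdots(T_r^{V'})_{b_p^1\dots b_p^r,\,b_1^1\dots b_1^r}$.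
   Context: A square matrix of operators is magic if its entries are orthogonal projections and rows and columns sum to $1$. For $U=(U_{ij})_{i,j=1}^n$, $U_{ij}\in M_n(\mathbb C)$, $U'$ is given by $(U'_{kl})_{ij}=(U_{ij})_{kl}$, and $U$ is a projective model if $U$ and $U'$ are magic. $T_p^U\in M_{n^p}(\mathbb C)$ has entries $(T_p^U)_{i_1\dots i_p,j_1\dots j_p}=tr(U_{i_1j_1}\cdots U_{i_pj_p})$ with $tr$ the normalized trace, and $c_p^r(U)=Tr((T_p^U)^r)$. $W=U\otimes_QV$ is defined by $(W_{ia,jb})_{kc,ld}=\frac{Q_{ic}Q_{jd}}{Q_{id}Q_{jc}}(U_{ij})_{kl}(V_{ab})_{cd}$, with $i,j,k,l\le M$ and $a,b,c,d\le N$; $c_p^r(W)$ is defined with $n=MN$. *)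

theory Defs
  imports Complex_Main "Jordan_Normal_Form.Matrix"
begin

text \<open>Block matrices A = (A i j), i,j < n, with A i j an n x n complex matrix (0-based indices).\<close>

definition adj_mat :: "complex mat \<Rightarrow> complex mat" where
  "adj_mat P = mat (dim_col P) (dim_row P) (\<lambda>(k,l). cnj (P $$ (l,k)))"

definition orth_proj :: "nat \<Rightarrow> complex mat \<Rightarrow> bool" where
  "orth_proj n P \<longleftrightarrow> P \<in> carrier_mat n n \<and> P * P = P \<and> adj_mat P = P"

definition magic :: "nat \<Rightarrow> (nat \<Rightarrow> nat \<Rightarrow> complex mat) \<Rightarrow> bool" where
  "magic n A \<longleftrightarrow>
     (\<forall>i<n. \<forall>j<n. orth_proj n (A i j)) \<and>
     (\<forall>i<n. \<forall>k<n. \<forall>l<n. (\<Sum>j<n. A i j $$ (k,l)) = (1\<^sub>m n) $$ (k,l)) \<and>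
     (\<forall>j<n. \<forall>k<n. \<forall>l<n. (\<Sum>i<n. A i j $$ (k,l)) = (1\<^sub>m n) $$ (k,l))"

definition prime_bm :: "nat \<Rightarrow> (nat \<Rightarrow> nat \<Rightarrow> complex mat) \<Rightarrow> (nat \<Rightarrow> nat \<Rightarrow> complex mat)" where
  "prime_bm n U = (\<lambda>k l. mat n n (\<lambda>(i,j). U i j $$ (k,l)))"

definition projective_model :: "nat \<Rightarrow> (nat \<Rightarrow> nat \<Rightarrow> complex mat) \<Rightarrow> bool" where
  "projective_model n U \<longleftrightarrow> magic n U \<and> magic n (prime_bm n U)"

definition mtrace :: "complex mat \<Rightarrow> complex" where
  "mtrace A = (\<Sum>k<dim_row A. A $$ (k,k))"

definition ntr :: "nat \<Rightarrow> complex mat \<Rightarrow> complex" where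
  "ntr n A = mtrace A / of_nat n"

definition mprod :: "nat \<Rightarrow> complex mat list \<Rightarrow> complex mat" where
  "mprod n As = foldr (\<lambda>A B. A * B) As (1\<^sub>m n)"

definition T_entry :: "nat \<Rightarrow> (nat \<Rightarrow> nat \<Rightarrow> complex mat) \<Rightarrow> nat \<Rightarrow> (nat \<Rightarrow> nat) \<Rightarrow> (nat \<Rightarrow> nat) \<Rightarrow> complex" where
  "T_entry n U p x y = ntr n (mprod n (map (\<lambda>s. U (x s) (y s)) [0..<p]))"

text \<open>Multi-index (x_1..x_p) in {0..<n}^p identified with x < n^p via base-n digits
  (x_1 most significant).\<close>
definition digit :: "nat \<Rightarrow> nat \<Rightarrow> nat \<Rightarrow> nat \<Rightarrow> nat" where
  "digit n p x s = (x div n ^ (p - 1 - s)) mod n"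

definition T_mat :: "nat \<Rightarrow> (nat \<Rightarrow> nat \<Rightarrow> complex mat) \<Rightarrow> nat \<Rightarrow> complex mat" where
  "T_mat n U p = mat (n ^ p) (n ^ p) (\<lambda>(x,y). T_entry n U p (digit n p x) (digit n p y))"

definition c_pr :: "nat \<Rightarrow> (nat \<Rightarrow> nat \<Rightarrow> complex mat) \<Rightarrow> nat \<Rightarrow> nat \<Rightarrow> complex" where
  "c_pr n U p r = mtrace (T_mat n U p ^\<^sub>m r)"

text \<open>W = U \<otimes>_Q V; the pair (i,a), i<M, a<N, is encoded as i*N + a.\<close>
definition qtensor :: "nat \<Rightarrow> nat \<Rightarrow> (nat \<Rightarrow> nat \<Rightarrow> complex) \<Rightarrow> (nat \<Rightarrow> nat \<Rightarrow> complex mat)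
    \<Rightarrow> (nat \<Rightarrow> nat \<Rightarrow> complex mat) \<Rightarrow> (nat \<Rightarrow> nat \<Rightarrow> complex mat)" where
  "qtensor M N Q U V = (\<lambda>\<alpha> \<beta>.
     (let i = \<alpha> div N; a = \<alpha> mod N; j = \<beta> div N; b = \<beta> mod N in
      mat (M*N) (M*N) (\<lambda>(\<gamma>,\<delta>).
        (let k = \<gamma> div N; c = \<gamma> mod N; l = \<delta> div N; d = \<delta> mod N in
          Q i c * Q j d / (Q i d * Q j c) * (U i j $$ (k,l)) * (V a b $$ (c,d))))))"

end

theory Submission
  imports Defs
begin

lemma mprod_carrier: "(\<forall>A\<in>set As. A \<in> carrier_mat n n) \<Longrightarrow> mprod n As \<in> carrier_mat n n"
  by (induction As) (auto simp: mprod_def)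

lemma mprod_append: "(\<forall>A\<in>set As. A \<in> carrier_mat n n) \<Longrightarrow> (\<forall>A\<in>set Bs. A \<in> carrier_mat n n) \<Longrightarrow>
   mprod n (As @ Bs) = mprod n As * mprod n Bs"
proof (induction As)
  case Nil then show ?case using mprod_carrier[of Bs n] by (simp add: mprod_def)
next
  case (Cons A As)
  have "mprod n ((A#As) @ Bs) = A * mprod n (As @ Bs)" by (simp add: mprod_def)
  also have "\<dots> = A * (mprod n As * mprod n Bs)" using Cons by simp
  also have "\<dots> = (A * mprod n As) * mprod n Bs"
    using Cons.prems mprod_carrier[of As n] mprod_carrier[of Bs n]
    by (subst assoc_mult_mat[of _ n n _ n _ n]) auto
  finally show ?case by (simp add: mprod_def)
qed

lemma mprod_single: "A \<in> carrier_mat n n \<Longrightarrow> mprod n [A] = A"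
  by (simp add: mprod_def)

lemma mprod_snoc: "(\<forall>A\<in>set As. A \<in> carrier_mat n n) \<Longrightarrow> B \<in> carrier_mat n n \<Longrightarrow>
   mprod n (As @ [B]) = mprod n As * B"
  using mprod_append[of As n "[B]"] by (simp add: mprod_single)

lemma pow_mprod: "A \<in> carrier_mat n n \<Longrightarrow> A ^\<^sub>m r = mprod n (map (\<lambda>_. A) [0..<r])"
proof (induction r)
  case 0 then show ?case by (simp add: mprod_def)
next
  case (Suc r)
  then show ?case by (simp add: mprod_snoc)
qed

lemma sum_PiE_Suc:
  assumes "finite S"
  shows "(\<Sum>\<gamma>\<in>{..<Suc m} \<rightarrow>\<^sub>E S. f \<gamma>) = (\<Sum>\<gamma>\<in>{..<m} \<rightarrow>\<^sub>E S. \<Sum>w\<in>S. f (\<gamma>(m:=w)))"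
proof -
  have "(\<Sum>\<gamma>\<in>{..<Suc m} \<rightarrow>\<^sub>E S. f \<gamma>) = (\<Sum>(w,\<gamma>)\<in>S \<times> ({..<m} \<rightarrow>\<^sub>E S). f (\<gamma>(m:=w)))"
    by (rule sum.reindex_bij_witness[where j="\<lambda>g. (g m, g(m := undefined))" and i="\<lambda>(y,g). g(m := y)"])
       (auto simp: PiE_def extensional_def Pi_def less_Suc_eq)
  also have "\<dots> = (\<Sum>w\<in>S. \<Sum>\<gamma>\<in>{..<m} \<rightarrow>\<^sub>E S. f (\<gamma>(m:=w)))"
    by (simp add: sum.cartesian_product)
  also have "\<dots> = (\<Sum>\<gamma>\<in>{..<m} \<rightarrow>\<^sub>E S. \<Sum>w\<in>S. f (\<gamma>(m:=w)))"
    by (rule sum.swap)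
  finally show ?thesis .
qed

lemma mult_entry_sum: "P \<in> carrier_mat n n \<Longrightarrow> A \<in> carrier_mat n n \<Longrightarrow> u < n \<Longrightarrow> v < n \<Longrightarrow>
   (P * A) $$ (u,v) = (\<Sum>w<n. P $$ (u,w) * A $$ (w,v))"
  by (simp add: scalar_prod_def atLeast0LessThan)

lemma mprod_walk_entry:
  assumes "\<And>s. s < Suc m \<Longrightarrow> As s \<in> carrier_mat n n" and "u < n" and "v < n"
  shows "(mprod n (map As [0..<Suc m])) $$ (u,v) =
    (\<Sum>\<gamma>\<in>{..<Suc m} \<rightarrow>\<^sub>E {..<n}. (if \<gamma> 0 = u then
        (\<Prod>s<Suc m. As s $$ (\<gamma> s, if Suc s = Suc m then v else \<gamma> (Suc s))) else 0))"
  using assms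
proof (induction m arbitrary: v)
  case 0
  have "mprod n (map As [0..<Suc 0]) = As 0" using 0 by (simp add: mprod_single)
  moreover have "(\<Sum>\<gamma>\<in>{..<Suc 0} \<rightarrow>\<^sub>E {..<n}. (if \<gamma> 0 = u then
        (\<Prod>s<Suc 0. As s $$ (\<gamma> s, if Suc s = Suc 0 then v else \<gamma> (Suc s))) else 0))
      = (\<Sum>w<n. (if w = u then As 0 $$ (w, v) else 0))"
    by (subst sum_PiE_Suc) auto
  ultimately show ?case using 0 by simp
next
  case (Suc m)
  let ?P = "mprod n (map As [0..<Suc m])"
  have carP: "?P \<in> carrier_mat n n" using Suc.prems by (intro mprod_carrier) auto
  have "mprod n (map As [0..<Suc (Suc m)]) = ?P * As (Suc m)"
  proof -
    have "map As [0..<Suc (Suc m)] = map As [0..<Suc m] @ [As (Suc m)]" by simp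
    then show ?thesis using Suc.prems by (simp only:) (rule mprod_snoc, auto)
  qed
  hence "mprod n (map As [0..<Suc (Suc m)]) $$ (u,v) = (\<Sum>w<n. ?P $$ (u,w) * As (Suc m) $$ (w,v))"
    using carP Suc.prems by (simp add: mult_entry_sum)
  also have "\<dots> = (\<Sum>w<n. \<Sum>\<gamma>\<in>{..<Suc m} \<rightarrow>\<^sub>E {..<n}. (if \<gamma> 0 = u then
        (\<Prod>s<Suc m. As s $$ (\<gamma> s, if Suc s = Suc m then w else \<gamma> (Suc s))) else 0) * As (Suc m) $$ (w,v))"
    using Suc.IH Suc.prems by (simp add: sum_distrib_right)
  also have "\<dots> = (\<Sum>\<gamma>\<in>{..<Suc m} \<rightarrow>\<^sub>E {..<n}. \<Sum>w<n. (if \<gamma> 0 = u then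
        (\<Prod>s<Suc m. As s $$ (\<gamma> s, if Suc s = Suc m then w else \<gamma> (Suc s))) else 0) * As (Suc m) $$ (w,v))"
    by (rule sum.swap)
  also have "\<dots> = (\<Sum>\<gamma>\<in>{..<Suc m} \<rightarrow>\<^sub>E {..<n}. \<Sum>w<n. (let \<gamma>' = \<gamma>(Suc m := w) in (if \<gamma>' 0 = u then
        (\<Prod>s<Suc (Suc m). As s $$ (\<gamma>' s, if Suc s = Suc (Suc m) then v else \<gamma>' (Suc s))) else 0)))"
  proof (intro sum.cong refl)
    fix \<gamma> w
    have "(\<Prod>s<Suc m. As s $$ (\<gamma> s, if Suc s = Suc m then w else \<gamma> (Suc s))) =
        (\<Prod>s<Suc m. As s $$ ((\<gamma>(Suc m := w)) s, if Suc s = Suc (Suc m) then v else (\<gamma>(Suc m := w)) (Suc s)))"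
      by (intro prod.cong refl) auto
    then show "(if \<gamma> 0 = u then
        (\<Prod>s<Suc m. As s $$ (\<gamma> s, if Suc s = Suc m then w else \<gamma> (Suc s))) else 0) * As (Suc m) $$ (w,v) =
      (let \<gamma>' = \<gamma>(Suc m := w) in (if \<gamma>' 0 = u then
        (\<Prod>s<Suc (Suc m). As s $$ (\<gamma>' s, if Suc s = Suc (Suc m) then v else \<gamma>' (Suc s))) else 0))"
      by (simp add: Let_def)
  qed
  also have "\<dots> = (\<Sum>\<gamma>\<in>{..<Suc (Suc m)} \<rightarrow>\<^sub>E {..<n}. (if \<gamma> 0 = u then
        (\<Prod>s<Suc (Suc m). As s $$ (\<gamma> s, if Suc s = Suc (Suc m) then v else \<gamma> (Suc s))) else 0))"
    by (subst (2) sum_PiE_Suc) (simp_all add: Let_def)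
  finally show ?case .
qed

lemma mtrace_mprod:
  assumes "\<And>s. s < Suc m \<Longrightarrow> As s \<in> carrier_mat n n"
  shows "mtrace (mprod n (map As [0..<Suc m])) =
    (\<Sum>\<gamma>\<in>{..<Suc m} \<rightarrow>\<^sub>E {..<n}. \<Prod>s<Suc m. As s $$ (\<gamma> s, \<gamma> ((s+1) mod Suc m)))"
proof -
  have car: "mprod n (map As [0..<Suc m]) \<in> carrier_mat n n" using assms by (intro mprod_carrier) auto
  have "mtrace (mprod n (map As [0..<Suc m])) = (\<Sum>u<n. (mprod n (map As [0..<Suc m])) $$ (u,u))"
    using car by (simp add: mtrace_def)
  also have "\<dots> = (\<Sum>u<n. \<Sum>\<gamma>\<in>{..<Suc m} \<rightarrow>\<^sub>E {..<n}. (if \<gamma> 0 = u then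
        (\<Prod>s<Suc m. As s $$ (\<gamma> s, if Suc s = Suc m then u else \<gamma> (Suc s))) else 0))"
    using assms by (intro sum.cong refl mprod_walk_entry) auto
  also have "\<dots> = (\<Sum>\<gamma>\<in>{..<Suc m} \<rightarrow>\<^sub>E {..<n}. \<Sum>u<n. (if \<gamma> 0 = u then
        (\<Prod>s<Suc m. As s $$ (\<gamma> s, if Suc s = Suc m then u else \<gamma> (Suc s))) else 0))"
    by (rule sum.swap)
  also have "\<dots> = (\<Sum>\<gamma>\<in>{..<Suc m} \<rightarrow>\<^sub>E {..<n}. \<Prod>s<Suc m. As s $$ (\<gamma> s, \<gamma> ((s+1) mod Suc m)))"
  proof (intro sum.cong refl)
    fix \<gamma> assume g: "\<gamma> \<in> {..<Suc m} \<rightarrow>\<^sub>E {..<n}"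
    hence "\<gamma> 0 < n" by auto
    hence "(\<Sum>u<n. (if \<gamma> 0 = u then
        (\<Prod>s<Suc m. As s $$ (\<gamma> s, if Suc s = Suc m then u else \<gamma> (Suc s))) else 0)) =
        (\<Prod>s<Suc m. As s $$ (\<gamma> s, if Suc s = Suc m then \<gamma> 0 else \<gamma> (Suc s)))"
      by (simp add: sum.delta[of "{..<n}" "\<gamma> 0"] eq_commute[of "\<gamma> 0"] cong: if_cong)
    also have "\<dots> = (\<Prod>s<Suc m. As s $$ (\<gamma> s, \<gamma> ((s+1) mod Suc m)))"
      by (intro prod.cong refl) (auto simp: mod_Suc)
    finally show "(\<Sum>u<n. (if \<gamma> 0 = u then
        (\<Prod>s<Suc m. As s $$ (\<gamma> s, if Suc s = Suc m then u else \<gamma> (Suc s))) else 0)) =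
        (\<Prod>s<Suc m. As s $$ (\<gamma> s, \<gamma> ((s+1) mod Suc m)))" .
  qed
  finally show ?thesis .
qed

lemma digit_Suc_less: "s < p \<Longrightarrow> digit n (Suc p) x s = digit n p (x div n) s"
proof -
  assume "s < p"
  then have "Suc p - 1 - s = Suc (p - 1 - s)" by simp
  then show ?thesis unfolding digit_def by (simp add: div_mult2_eq)
qed

lemma digit_Suc_last: "digit n (Suc p) x p = x mod n"
  by (simp add: digit_def)

lemma digit_inj: "x < n ^ p \<Longrightarrow> y < n ^ p \<Longrightarrow> (\<forall>s<p. digit n p x s = digit n p y s) \<Longrightarrow> x = y"
proof (induction p arbitrary: x y)
  case 0 then show ?case by simp
next
  case (Suc p)
  have n: "n > 0" using Suc.prems(1) by (cases n) auto
  have "x div n < n ^ p" "y div n < n ^ p" using Suc.prems n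
    by (auto simp: div_less_iff_less_mult mult.commute)
  moreover have "\<forall>s<p. digit n p (x div n) s = digit n p (y div n) s"
    using Suc.prems(3) by (auto simp: digit_Suc_less[symmetric])
  ultimately have "x div n = y div n" using Suc.IH by blast
  moreover have "x mod n = y mod n" using Suc.prems(3)[rule_format, of p] by (simp add: digit_Suc_last)
  ultimately show ?case by (metis div_mod_decomp)
qed

lemma digit_bij:
  assumes "n > 0"
  shows "bij_betw (\<lambda>x. \<lambda>s\<in>{..<p}. digit n p x s) {..<n^p} ({..<p} \<rightarrow>\<^sub>E {..<n})"
proof -
  let ?f = "\<lambda>x. \<lambda>s\<in>{..<p}. digit n p x s"
  have inj: "inj_on ?f {..<n^p}"
  proof (rule inj_onI)
    fix x y assume "x \<in> {..<n^p}" "y \<in> {..<n^p}" "?f x = ?f y"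
    then show "x = y" by (intro digit_inj[of x n p y]) (auto simp: fun_eq_iff, metis)
  qed
  have sub: "?f ` {..<n^p} \<subseteq> {..<p} \<rightarrow>\<^sub>E {..<n}"
  proof (rule image_subsetI)
    fix x show "?f x \<in> {..<p} \<rightarrow>\<^sub>E {..<n}"
      by (rule restrict_PiE_iff[THEN iffD2]) (auto simp: digit_def assms)
  qed
  have "card (?f ` {..<n^p}) = card ({..<p} \<rightarrow>\<^sub>E {..<n})"
    using inj by (simp add: card_image card_PiE)
  then have "?f ` {..<n^p} = {..<p} \<rightarrow>\<^sub>E {..<n}"
    using sub by (intro card_subset_eq) (auto simp: finite_PiE)
  then show ?thesis using inj by (simp add: bij_betw_def)
qed

lemma bij_PiE_lift:
  assumes "bij_betw h A B"
  shows "bij_betw (\<lambda>w. \<lambda>t\<in>I. h (w t)) (I \<rightarrow>\<^sub>E A) (I \<rightarrow>\<^sub>E B)"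
proof (rule bij_betw_byWitness[where f'="\<lambda>v. \<lambda>t\<in>I. inv_into A h (v t)"])
  have inv1: "\<And>a. a \<in> A \<Longrightarrow> inv_into A h (h a) = a" using assms by (simp add: bij_betw_def)
  have inv2: "\<And>b. b \<in> B \<Longrightarrow> h (inv_into A h b) = b" using assms by (meson bij_betw_inv_into_right)
  have m1: "\<And>a. a \<in> A \<Longrightarrow> h a \<in> B" using assms by (meson bij_betwE)
  have m2: "\<And>b. b \<in> B \<Longrightarrow> inv_into A h b \<in> A" using assms by (meson bij_betwE bij_betw_inv_into)
  show "\<forall>a\<in>I \<rightarrow>\<^sub>E A. (\<lambda>t\<in>I. inv_into A h ((\<lambda>t\<in>I. h (a t)) t)) = a"
    using inv1 by (auto simp: PiE_def extensional_def fun_eq_iff)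
  show "\<forall>a'\<in>I \<rightarrow>\<^sub>E B. (\<lambda>t\<in>I. h ((\<lambda>t\<in>I. inv_into A h (a' t)) t)) = a'"
    using inv2 by (auto simp: PiE_def extensional_def fun_eq_iff)
  show "(\<lambda>w. \<lambda>t\<in>I. h (w t)) ` (I \<rightarrow>\<^sub>E A) \<subseteq> I \<rightarrow>\<^sub>E B" using m1 by (auto simp: PiE_iff)
  show "(\<lambda>v. \<lambda>t\<in>I. inv_into A h (v t)) ` (I \<rightarrow>\<^sub>E B) \<subseteq> I \<rightarrow>\<^sub>E A" using m2 by (auto simp: PiE_iff)
qed

lemma pair_lt: "i < (M::nat) \<Longrightarrow> a < N \<Longrightarrow> i * N + a < M * N"
proof -
  assume "i < M" "a < N"
  then have "i * N + a < (i+1) * N" by simp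
  also have "\<dots> \<le> M * N" using \<open>i < M\<close> by (intro mult_right_mono) auto
  finally show ?thesis .
qed

lemma pair_div: "a < N \<Longrightarrow> (i * N + a) div N = (i::nat)" by simp
lemma pair_mod: "a < N \<Longrightarrow> (i * N + a) mod N = (a::nat)" by simp

lemma split1:
  fixes M N :: nat
  assumes "N > 0"
  shows "(\<Sum>\<gamma>\<in>I \<rightarrow>\<^sub>E {..<M*N}. G \<gamma>) =
    (\<Sum>k\<in>I \<rightarrow>\<^sub>E {..<M}. \<Sum>c\<in>I \<rightarrow>\<^sub>E {..<N}. G (\<lambda>s\<in>I. k s * N + c s))"
proof -
  have "(\<Sum>\<gamma>\<in>I \<rightarrow>\<^sub>E {..<M*N}. G \<gamma>) =
    (\<Sum>(k,c)\<in>(I \<rightarrow>\<^sub>E {..<M}) \<times> (I \<rightarrow>\<^sub>E {..<N}). G (\<lambda>s\<in>I. k s * N + c s))"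
    apply (rule sum.reindex_bij_witness[where j="\<lambda>\<gamma>. (\<lambda>s\<in>I. \<gamma> s div N, \<lambda>s\<in>I. \<gamma> s mod N)"
          and i="\<lambda>(k,c). \<lambda>s\<in>I. k s * N + c s"])
    using assms apply (auto simp: PiE_def extensional_def fun_eq_iff Pi_def pair_lt less_mult_imp_div_less)[4]
    apply (simp only: case_prod_conv)
    apply (rule arg_cong[where f=G])
    apply (auto simp: PiE_iff extensional_def fun_eq_iff)
    done
  then show ?thesis by (simp add: sum.cartesian_product)
qed

lemma split2:
  fixes M N :: nat
  assumes "N > 0"
  shows "(\<Sum>\<alpha>\<in>I \<rightarrow>\<^sub>E (J \<rightarrow>\<^sub>E {..<M*N}). G \<alpha>) =
    (\<Sum>i\<in>I \<rightarrow>\<^sub>E (J \<rightarrow>\<^sub>E {..<M}). \<Sum>a\<in>I \<rightarrow>\<^sub>E (J \<rightarrow>\<^sub>E {..<N}).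
        G (\<lambda>t\<in>I. \<lambda>s\<in>J. i t s * N + a t s))"
proof -
  have "(\<Sum>\<alpha>\<in>I \<rightarrow>\<^sub>E (J \<rightarrow>\<^sub>E {..<M*N}). G \<alpha>) =
    (\<Sum>(i,a)\<in>(I \<rightarrow>\<^sub>E (J \<rightarrow>\<^sub>E {..<M})) \<times> (I \<rightarrow>\<^sub>E (J \<rightarrow>\<^sub>E {..<N})).
        G (\<lambda>t\<in>I. \<lambda>s\<in>J. i t s * N + a t s))"
    apply (rule sum.reindex_bij_witness[where
          j="\<lambda>\<alpha>. (\<lambda>t\<in>I. \<lambda>s\<in>J. \<alpha> t s div N, \<lambda>t\<in>I. \<lambda>s\<in>J. \<alpha> t s mod N)"
          and i="\<lambda>(i,a). \<lambda>t\<in>I. \<lambda>s\<in>J. i t s * N + a t s"])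
    using assms apply (auto simp: PiE_def extensional_def fun_eq_iff Pi_def pair_lt less_mult_imp_div_less)[4]
    apply (simp only: case_prod_conv)
    apply (rule arg_cong[where f=G])
    apply (auto simp: PiE_iff extensional_def fun_eq_iff)
    done
  then show ?thesis by (simp add: sum.cartesian_product)
qed

lemma transpose_sum:
  "(\<Sum>a\<in>I \<rightarrow>\<^sub>E (J \<rightarrow>\<^sub>E S). G a) = (\<Sum>b\<in>J \<rightarrow>\<^sub>E (I \<rightarrow>\<^sub>E S). G (\<lambda>t\<in>I. \<lambda>s\<in>J. b s t))"
  apply (rule sum.reindex_bij_witness[where j="\<lambda>a. \<lambda>s\<in>J. \<lambda>t\<in>I. a t s"
        and i="\<lambda>b. \<lambda>t\<in>I. \<lambda>s\<in>J. b s t"])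
  apply (auto simp: PiE_def extensional_def fun_eq_iff Pi_def)[4]
  apply (rule arg_cong[where f=G])
  apply (auto simp: PiE_iff extensional_def fun_eq_iff)
  done

lemma T_entry_cong: "(\<And>s. s < p \<Longrightarrow> x s = x' s) \<Longrightarrow> (\<And>s. s < p \<Longrightarrow> y s = y' s) \<Longrightarrow>
   T_entry n U p x y = T_entry n U p x' y'"
  unfolding T_entry_def by (intro arg_cong[where f="\<lambda>l. ntr n (mprod n l)"] map_cong) auto

lemma qtensor_carrier: "qtensor M N Q U V \<alpha> \<beta> \<in> carrier_mat (M*N) (M*N)"
  by (simp add: qtensor_def Let_def)

lemma qtensor_entry:
  fixes M N :: nat
  assumes "i < M" "j < M" "a < N" "b < N" "k < M" "l < M" "c < N" "d < N"
  shows "qtensor M N Q U V (i*N+a) (j*N+b) $$ (k*N+c, l*N+d) =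
     Q i c * Q j d / (Q i d * Q j c) * (U i j $$ (k,l)) * (V a b $$ (c,d))"
  using assms by (simp add: qtensor_def Let_def pair_lt)

lemma T_entry_W:
  fixes M N :: nat
  assumes "M > 0" "N > 0"
    and "\<And>s. s < Suc m \<Longrightarrow> i s < M \<and> j s < M \<and> a s < N \<and> b s < N"
  shows "T_entry (M*N) (qtensor M N Q U V) (Suc m) (\<lambda>s. i s * N + a s) (\<lambda>s. j s * N + b s) =
    1 / of_nat (M*N) * (\<Sum>k\<in>{..<Suc m} \<rightarrow>\<^sub>E {..<M}. \<Sum>c\<in>{..<Suc m} \<rightarrow>\<^sub>E {..<N}.
      \<Prod>s<Suc m. Q (i s) (c s) * Q (j s) (c ((s+1) mod Suc m)) / (Q (i s) (c ((s+1) mod Suc m)) * Q (j s) (c s))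
         * (U (i s) (j s) $$ (k s, k ((s+1) mod Suc m))) * (V (a s) (b s) $$ (c s, c ((s+1) mod Suc m))))"
proof -
  let ?W = "qtensor M N Q U V"
  let ?p = "Suc m"
  have "T_entry (M*N) ?W ?p (\<lambda>s. i s * N + a s) (\<lambda>s. j s * N + b s) =
     mtrace (mprod (M*N) (map (\<lambda>s. ?W (i s * N + a s) (j s * N + b s)) [0..<?p])) / of_nat (M*N)"
    by (simp add: T_entry_def ntr_def)
  also have "mtrace (mprod (M*N) (map (\<lambda>s. ?W (i s * N + a s) (j s * N + b s)) [0..<?p])) =
     (\<Sum>\<gamma>\<in>{..<?p} \<rightarrow>\<^sub>E {..<M*N}. \<Prod>s<?p. ?W (i s * N + a s) (j s * N + b s) $$ (\<gamma> s, \<gamma> ((s+1) mod ?p)))"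
    by (rule mtrace_mprod) (rule qtensor_carrier)
  also have "\<dots> = (\<Sum>k\<in>{..<?p} \<rightarrow>\<^sub>E {..<M}. \<Sum>c\<in>{..<?p} \<rightarrow>\<^sub>E {..<N}.
      \<Prod>s<?p. ?W (i s * N + a s) (j s * N + b s) $$
          ((\<lambda>s\<in>{..<?p}. k s * N + c s) s, (\<lambda>s\<in>{..<?p}. k s * N + c s) ((s+1) mod ?p)))"
    using assms(2) by (rule split1)
  also have "\<dots> = (\<Sum>k\<in>{..<Suc m} \<rightarrow>\<^sub>E {..<M}. \<Sum>c\<in>{..<Suc m} \<rightarrow>\<^sub>E {..<N}.
      \<Prod>s<Suc m. Q (i s) (c s) * Q (j s) (c ((s+1) mod Suc m)) / (Q (i s) (c ((s+1) mod Suc m)) * Q (j s) (c s))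
         * (U (i s) (j s) $$ (k s, k ((s+1) mod Suc m))) * (V (a s) (b s) $$ (c s, c ((s+1) mod Suc m))))"
  proof (intro sum.cong refl prod.cong)
    fix k c s assume k: "k \<in> {..<?p} \<rightarrow>\<^sub>E {..<M}" and c: "c \<in> {..<?p} \<rightarrow>\<^sub>E {..<N}" and s: "s \<in> {..<?p}"
    have s': "(s+1) mod ?p < ?p" by simp
    have "?W (i s * N + a s) (j s * N + b s) $$
          ((\<lambda>s\<in>{..<?p}. k s * N + c s) s, (\<lambda>s\<in>{..<?p}. k s * N + c s) ((s+1) mod ?p))
        = ?W (i s * N + a s) (j s * N + b s) $$ (k s * N + c s, k ((s+1) mod ?p) * N + c ((s+1) mod ?p))"
      using s s' by simp
    also have "\<dots> = Q (i s) (c s) * Q (j s) (c ((s+1) mod Suc m)) / (Q (i s) (c ((s+1) mod Suc m)) * Q (j s) (c s))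
         * (U (i s) (j s) $$ (k s, k ((s+1) mod Suc m))) * (V (a s) (b s) $$ (c s, c ((s+1) mod Suc m)))"
      apply (rule qtensor_entry)
      using assms(3)[of s] s s' k c by (auto simp: PiE_iff)
    finally show "?W (i s * N + a s) (j s * N + b s) $$
          ((\<lambda>s\<in>{..<?p}. k s * N + c s) s, (\<lambda>s\<in>{..<?p}. k s * N + c s) ((s+1) mod ?p)) =
        Q (i s) (c s) * Q (j s) (c ((s+1) mod Suc m)) / (Q (i s) (c ((s+1) mod Suc m)) * Q (j s) (c s))
         * (U (i s) (j s) $$ (k s, k ((s+1) mod Suc m))) * (V (a s) (b s) $$ (c s, c ((s+1) mod Suc m)))" .
  qed
  finally show ?thesis by simp
qed

lemma Usum:
  fixes M :: nat
  assumes "M > 0" and car: "\<And>i j. i < M \<Longrightarrow> j < M \<Longrightarrow> U i j \<in> carrier_mat M M"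
    and x: "\<And>t s. t < r \<Longrightarrow> s < Suc m \<Longrightarrow> x t s < M"
  shows "(\<Sum>K\<in>{..<r} \<rightarrow>\<^sub>E ({..<Suc m} \<rightarrow>\<^sub>E {..<M}). \<Prod>t<r. \<Prod>s<Suc m.
       U (x t s) (x ((t+1) mod r) s) $$ (K t s, K t ((s+1) mod Suc m))) =
     of_nat (M^r) * (\<Prod>t<r. T_entry M U (Suc m) (x t) (x ((t+1) mod r)))"
proof -
  have "(\<Sum>K\<in>{..<r} \<rightarrow>\<^sub>E ({..<Suc m} \<rightarrow>\<^sub>E {..<M}). \<Prod>t<r. \<Prod>s<Suc m.
       U (x t s) (x ((t+1) mod r) s) $$ (K t s, K t ((s+1) mod Suc m))) =
     (\<Prod>t<r. \<Sum>k\<in>{..<Suc m} \<rightarrow>\<^sub>E {..<M}. \<Prod>s<Suc m.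
       U (x t s) (x ((t+1) mod r) s) $$ (k s, k ((s+1) mod Suc m)))"
    by (rule prod_sum_PiE[symmetric]) (auto simp: finite_PiE)
  also have "\<dots> = (\<Prod>t<r. of_nat M * T_entry M U (Suc m) (x t) (x ((t+1) mod r)))"
  proof (intro prod.cong refl)
    fix t assume t: "t \<in> {..<r}"
    then have t': "(t+1) mod r < r" by auto
    have "(\<Sum>k\<in>{..<Suc m} \<rightarrow>\<^sub>E {..<M}. \<Prod>s<Suc m.
       U (x t s) (x ((t+1) mod r) s) $$ (k s, k ((s+1) mod Suc m))) =
       mtrace (mprod M (map (\<lambda>s. U (x t s) (x ((t+1) mod r) s)) [0..<Suc m]))"
      using t t' by (intro mtrace_mprod[symmetric] car x) auto
    also have "\<dots> = of_nat M * T_entry M U (Suc m) (x t) (x ((t+1) mod r))"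
      using assms(1) by (simp add: T_entry_def ntr_def)
    finally show "(\<Sum>k\<in>{..<Suc m} \<rightarrow>\<^sub>E {..<M}. \<Prod>s<Suc m.
       U (x t s) (x ((t+1) mod r) s) $$ (k s, k ((s+1) mod Suc m))) =
       of_nat M * T_entry M U (Suc m) (x t) (x ((t+1) mod r))" .
  qed
  also have "\<dots> = of_nat (M^r) * (\<Prod>t<r. T_entry M U (Suc m) (x t) (x ((t+1) mod r)))"
    by (simp add: prod.distrib)
  finally show ?thesis .
qed

lemma prime_bm_entry: "x < n \<Longrightarrow> y < n \<Longrightarrow> prime_bm n V k l $$ (x,y) = V x y $$ (k,l)"
  by (simp add: prime_bm_def)

lemma prime_bm_carrier: "prime_bm n V k l \<in> carrier_mat n n"
  by (simp add: prime_bm_def)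

lemma Vsum:
  fixes N :: nat
  assumes "N > 0"
  shows "(\<Sum>a\<in>{..<Suc q} \<rightarrow>\<^sub>E ({..<p} \<rightarrow>\<^sub>E {..<N}). \<Prod>t<Suc q. \<Prod>s<p.
       V (a t s) (a ((t+1) mod Suc q) s) $$ (C t s, C t ((s+1) mod p))) =
     of_nat (N^p) * (\<Prod>s<p. T_entry N (prime_bm N V) (Suc q) (\<lambda>t. C t s) (\<lambda>t. C t ((s+1) mod p)))"
proof -
  let ?r = "Suc q"
  have "(\<Sum>a\<in>{..<?r} \<rightarrow>\<^sub>E ({..<p} \<rightarrow>\<^sub>E {..<N}). \<Prod>t<?r. \<Prod>s<p.
       V (a t s) (a ((t+1) mod ?r) s) $$ (C t s, C t ((s+1) mod p))) =
     (\<Sum>b\<in>{..<p} \<rightarrow>\<^sub>E ({..<?r} \<rightarrow>\<^sub>E {..<N}). \<Prod>t<?r. \<Prod>s<p.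
       V ((\<lambda>t\<in>{..<?r}. \<lambda>s\<in>{..<p}. b s t) t s) ((\<lambda>t\<in>{..<?r}. \<lambda>s\<in>{..<p}. b s t) ((t+1) mod ?r) s)
         $$ (C t s, C t ((s+1) mod p)))"
    by (rule transpose_sum)
  also have "\<dots> = (\<Sum>b\<in>{..<p} \<rightarrow>\<^sub>E ({..<?r} \<rightarrow>\<^sub>E {..<N}). \<Prod>s<p. \<Prod>t<?r.
       V (b s t) (b s ((t+1) mod ?r)) $$ (C t s, C t ((s+1) mod p)))"
    by (subst prod.swap) (intro sum.cong refl prod.cong, auto)
  also have "\<dots> = (\<Prod>s<p. \<Sum>g\<in>{..<?r} \<rightarrow>\<^sub>E {..<N}. \<Prod>t<?r.
       V (g t) (g ((t+1) mod ?r)) $$ (C t s, C t ((s+1) mod p)))"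
    by (rule prod_sum_PiE[symmetric]) (auto simp: finite_PiE)
  also have "\<dots> = (\<Prod>s<p. of_nat N * T_entry N (prime_bm N V) ?r (\<lambda>t. C t s) (\<lambda>t. C t ((s+1) mod p)))"
  proof (intro prod.cong refl)
    fix s
    have "(\<Sum>g\<in>{..<?r} \<rightarrow>\<^sub>E {..<N}. \<Prod>t<?r.
       V (g t) (g ((t+1) mod ?r)) $$ (C t s, C t ((s+1) mod p))) =
      (\<Sum>g\<in>{..<?r} \<rightarrow>\<^sub>E {..<N}. \<Prod>t<?r.
       prime_bm N V (C t s) (C t ((s+1) mod p)) $$ (g t, g ((t+1) mod ?r)))"
      by (intro sum.cong refl prod.cong) (auto simp: prime_bm_entry PiE_iff)
    also have "\<dots> = mtrace (mprod N (map (\<lambda>t. prime_bm N V (C t s) (C t ((s+1) mod p))) [0..<?r]))"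
      by (intro mtrace_mprod[symmetric] prime_bm_carrier)
    also have "\<dots> = of_nat N * T_entry N (prime_bm N V) ?r (\<lambda>t. C t s) (\<lambda>t. C t ((s+1) mod p))"
      using assms by (simp add: T_entry_def ntr_def)
    finally show "(\<Sum>g\<in>{..<?r} \<rightarrow>\<^sub>E {..<N}. \<Prod>t<?r.
       V (g t) (g ((t+1) mod ?r)) $$ (C t s, C t ((s+1) mod p))) =
       of_nat N * T_entry N (prime_bm N V) ?r (\<lambda>t. C t s) (\<lambda>t. C t ((s+1) mod p))" .
  qed
  also have "\<dots> = of_nat (N^p) * (\<Prod>s<p. T_entry N (prime_bm N V) ?r (\<lambda>t. C t s) (\<lambda>t. C t ((s+1) mod p)))"
    by (simp add: prod.distrib)
  finally show ?thesis .
qed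

lemma sum_rearr:
  fixes X :: "'c \<Rightarrow> 'd::comm_semiring_1"
  shows "(\<Sum>a\<in>A. \<Sum>k\<in>B. \<Sum>c\<in>C. X c * Y k * Z a c) = (\<Sum>c\<in>C. X c * (\<Sum>k\<in>B. Y k) * (\<Sum>a\<in>A. Z a c))"
proof -
  have "(\<Sum>a\<in>A. \<Sum>k\<in>B. \<Sum>c\<in>C. X c * Y k * Z a c) = (\<Sum>a\<in>A. \<Sum>c\<in>C. \<Sum>k\<in>B. X c * Y k * Z a c)"
    by (intro sum.cong refl sum.swap)
  also have "\<dots> = (\<Sum>c\<in>C. \<Sum>a\<in>A. \<Sum>k\<in>B. X c * Y k * Z a c)" by (rule sum.swap)
  also have "\<dots> = (\<Sum>c\<in>C. X c * (\<Sum>k\<in>B. Y k) * (\<Sum>a\<in>A. Z a c))"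
    by (simp add: sum_distrib_left sum_distrib_right mult.assoc mult.commute mult.left_commute)
       (intro sum.cong refl sum.swap)
  finally show ?thesis .
qed

lemma main:
  fixes M N m q :: nat
  assumes M: "M > 0" and N: "N > 0"
    and car: "\<And>i j. i < M \<Longrightarrow> j < M \<Longrightarrow> U i j \<in> carrier_mat M M"
  shows "c_pr (M*N) (qtensor M N Q U V) (Suc m) (Suc q) =
    1 / of_nat ((M*N)^(Suc q)) *
    (\<Sum>i\<in>{..<Suc q} \<rightarrow>\<^sub>E ({..<Suc m} \<rightarrow>\<^sub>E {..<M}).
     \<Sum>b\<in>{..<Suc q} \<rightarrow>\<^sub>E ({..<Suc m} \<rightarrow>\<^sub>E {..<N}).
       (of_nat (M^(Suc q)) * (\<Prod>t<Suc q. T_entry M U (Suc m) (i t) (i ((t+1) mod (Suc q))))) *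
       (of_nat (N^(Suc m)) * (\<Prod>s<Suc m. T_entry N (prime_bm N V) (Suc q)
                              (\<lambda>t. b t s) (\<lambda>t. b t ((s+1) mod (Suc m))))) *
       (\<Prod>t<Suc q. \<Prod>s<Suc m.
          Q (i t s) (b t s) * Q (i ((t+1) mod (Suc q)) s) (b t ((s+1) mod (Suc m))) /
          (Q (i t s) (b t ((s+1) mod (Suc m))) * Q (i ((t+1) mod (Suc q)) s) (b t s))))"
proof -
  let ?p = "Suc m" and ?r = "Suc q"
  let ?W = "qtensor M N Q U V"
  let ?T = "T_mat (M*N) ?W ?p"
  define dg where "dg x = (\<lambda>s\<in>{..<?p}. digit (M*N) ?p x s)" for x
  define phi where "phi i t c s = Q (i t s) (c s) * Q (i ((t+1) mod ?r) s) (c ((s+1) mod ?p)) /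
      (Q (i t s) (c ((s+1) mod ?p)) * Q (i ((t+1) mod ?r) s) (c s))" for i :: "nat \<Rightarrow> nat \<Rightarrow> nat" and t and c :: "nat \<Rightarrow> nat" and s
  define Ue where "Ue i t k s = U (i t s) (i ((t+1) mod ?r) s) $$ (k s, k ((s+1) mod ?p))"
    for i :: "nat \<Rightarrow> nat \<Rightarrow> nat" and t and k :: "nat \<Rightarrow> nat" and s
  define Ve where "Ve a t c s = V (a t s) (a ((t+1) mod ?r) s) $$ (c s, c ((s+1) mod ?p))"
    for a :: "nat \<Rightarrow> nat \<Rightarrow> nat" and t and c :: "nat \<Rightarrow> nat" and s
  let ?IM = "{..<?r} \<rightarrow>\<^sub>E ({..<?p} \<rightarrow>\<^sub>E {..<M})"
  let ?IN = "{..<?r} \<rightarrow>\<^sub>E ({..<?p} \<rightarrow>\<^sub>E {..<N})"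
  let ?c = "1 / of_nat (M*N) :: complex"
  have T_car: "?T \<in> carrier_mat ((M*N)^?p) ((M*N)^?p)" by (simp add: T_mat_def)
  have S1: "c_pr (M*N) ?W ?p ?r =
     (\<Sum>w\<in>{..<?r} \<rightarrow>\<^sub>E {..<(M*N)^?p}. \<Prod>t<?r. ?T $$ (w t, w ((t+1) mod ?r)))"
    unfolding c_pr_def pow_mprod[OF T_car] by (rule mtrace_mprod) (rule T_car)
  also have S2: "\<dots> = (\<Sum>w\<in>{..<?r} \<rightarrow>\<^sub>E {..<(M*N)^?p}.
       \<Prod>t<?r. T_entry (M*N) ?W ?p (dg (w t)) (dg (w ((t+1) mod ?r))))"
  proof (intro sum.cong refl prod.cong)
    fix w t assume w: "w \<in> {..<?r} \<rightarrow>\<^sub>E {..<(M*N)^?p}" and t: "t \<in> {..<?r}"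
    have "w t < (M*N)^?p" "w ((t+1) mod ?r) < (M*N)^?p" using w t by (auto simp: PiE_iff)
    then show "?T $$ (w t, w ((t+1) mod ?r)) = T_entry (M*N) ?W ?p (dg (w t)) (dg (w ((t+1) mod ?r)))"
      by (simp add: T_mat_def dg_def cong: T_entry_cong)
  qed
  also have S3: "\<dots> = (\<Sum>\<alpha>\<in>{..<?r} \<rightarrow>\<^sub>E ({..<?p} \<rightarrow>\<^sub>E {..<M*N}).
       \<Prod>t<?r. T_entry (M*N) ?W ?p (\<alpha> t) (\<alpha> ((t+1) mod ?r)))"
  proof -
    have bij: "bij_betw (\<lambda>w. \<lambda>t\<in>{..<?r}. dg (w t)) ({..<?r} \<rightarrow>\<^sub>E {..<(M*N)^?p})
        ({..<?r} \<rightarrow>\<^sub>E ({..<?p} \<rightarrow>\<^sub>E {..<M*N}))"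
      unfolding dg_def by (rule bij_PiE_lift, rule digit_bij) (use M N in simp)
    have "(\<Sum>w\<in>{..<?r} \<rightarrow>\<^sub>E {..<(M*N)^?p}. (\<lambda>\<alpha>. \<Prod>t<?r. T_entry (M*N) ?W ?p (\<alpha> t) (\<alpha> ((t+1) mod ?r)))
           ((\<lambda>w. \<lambda>t\<in>{..<?r}. dg (w t)) w)) =
        (\<Sum>\<alpha>\<in>{..<?r} \<rightarrow>\<^sub>E ({..<?p} \<rightarrow>\<^sub>E {..<M*N}). \<Prod>t<?r. T_entry (M*N) ?W ?p (\<alpha> t) (\<alpha> ((t+1) mod ?r)))"
      using bij by (rule sum.reindex_bij_betw)
    then show ?thesis by simp
  qed
  also have S4: "\<dots> = (\<Sum>i\<in>{..<?r} \<rightarrow>\<^sub>E ({..<?p} \<rightarrow>\<^sub>E {..<M}). \<Sum>a\<in>{..<?r} \<rightarrow>\<^sub>E ({..<?p} \<rightarrow>\<^sub>E {..<N}).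
       \<Prod>t<?r. T_entry (M*N) ?W ?p (\<lambda>s. i t s * N + a t s) (\<lambda>s. i ((t+1) mod ?r) s * N + a ((t+1) mod ?r) s))"
    apply (subst split2[OF N])
    apply (intro sum.cong refl prod.cong)
    apply (simp cong: T_entry_cong)
    done
  also have S5: "\<dots> = (\<Sum>i\<in>?IM. \<Sum>a\<in>?IN. \<Prod>t<?r. ?c *
      (\<Sum>k\<in>{..<?p} \<rightarrow>\<^sub>E {..<M}. \<Sum>c\<in>{..<?p} \<rightarrow>\<^sub>E {..<N}.
        \<Prod>s<?p. phi i t c s * Ue i t k s * Ve a t c s))"
  proof (intro sum.cong refl prod.cong)
    fix i a t assume i: "i \<in> ?IM" and a: "a \<in> ?IN" and t: "t \<in> {..<?r}"
    have t': "(t+1) mod ?r < ?r" by simp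
    show "T_entry (M*N) ?W ?p (\<lambda>s. i t s * N + a t s) (\<lambda>s. i ((t+1) mod ?r) s * N + a ((t+1) mod ?r) s) =
      ?c * (\<Sum>k\<in>{..<?p} \<rightarrow>\<^sub>E {..<M}. \<Sum>c\<in>{..<?p} \<rightarrow>\<^sub>E {..<N}.
        \<Prod>s<?p. phi i t c s * Ue i t k s * Ve a t c s)"
      unfolding phi_def Ue_def Ve_def
      by (rule T_entry_W[OF M N]) (use i a t t' in \<open>auto simp: PiE_iff\<close>)
  qed
  also have S6: "\<dots> = (\<Sum>i\<in>?IM. \<Sum>a\<in>?IN. ?c ^ ?r *
      (\<Sum>K\<in>?IM. \<Sum>C\<in>?IN.
        \<Prod>t<?r. \<Prod>s<?p. phi i t (C t) s * Ue i t (K t) s * Ve a t (C t) s))"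
  proof (intro sum.cong refl)
    fix i a
    have "(\<Prod>t<?r. \<Sum>k\<in>{..<?p} \<rightarrow>\<^sub>E {..<M}. \<Sum>c\<in>{..<?p} \<rightarrow>\<^sub>E {..<N}.
        \<Prod>s<?p. phi i t c s * Ue i t k s * Ve a t c s) =
      (\<Sum>K\<in>?IM. \<Prod>t<?r. \<Sum>c\<in>{..<?p} \<rightarrow>\<^sub>E {..<N}.
        \<Prod>s<?p. phi i t c s * Ue i t (K t) s * Ve a t c s)"
      by (rule prod_sum_PiE) (auto simp: finite_PiE)
    also have "\<dots> = (\<Sum>K\<in>?IM. \<Sum>C\<in>?IN.
        \<Prod>t<?r. \<Prod>s<?p. phi i t (C t) s * Ue i t (K t) s * Ve a t (C t) s)"
      by (intro sum.cong refl prod_sum_PiE) (auto simp: finite_PiE)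
    finally show "(\<Prod>t<?r. ?c *
      (\<Sum>k\<in>{..<?p} \<rightarrow>\<^sub>E {..<M}. \<Sum>c\<in>{..<?p} \<rightarrow>\<^sub>E {..<N}.
        \<Prod>s<?p. phi i t c s * Ue i t k s * Ve a t c s)) = ?c ^ ?r *
      (\<Sum>K\<in>?IM. \<Sum>C\<in>?IN.
        \<Prod>t<?r. \<Prod>s<?p. phi i t (C t) s * Ue i t (K t) s * Ve a t (C t) s)"
      by (simp only: prod.distrib prod_constant card_lessThan)
  qed
  also have S7: "\<dots> = (\<Sum>i\<in>?IM. ?c ^ ?r * (\<Sum>a\<in>?IN. \<Sum>K\<in>?IM. \<Sum>C\<in>?IN.
        (\<Prod>t<?r. \<Prod>s<?p. phi i t (C t) s) * (\<Prod>t<?r. \<Prod>s<?p. Ue i t (K t) s) *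
        (\<Prod>t<?r. \<Prod>s<?p. Ve a t (C t) s)))"
    by (simp add: prod.distrib sum_distrib_left)
  also have S8: "\<dots> = (\<Sum>i\<in>?IM. ?c ^ ?r * (\<Sum>C\<in>?IN.
        (\<Prod>t<?r. \<Prod>s<?p. phi i t (C t) s) * (\<Sum>K\<in>?IM. \<Prod>t<?r. \<Prod>s<?p. Ue i t (K t) s) *
        (\<Sum>a\<in>?IN. \<Prod>t<?r. \<Prod>s<?p. Ve a t (C t) s)))"
    by (simp only: sum_rearr)
  also have S9: "\<dots> = (\<Sum>i\<in>?IM. ?c ^ ?r * (\<Sum>C\<in>?IN.
        (\<Prod>t<?r. \<Prod>s<?p. phi i t (C t) s) *
        (of_nat (M^?r) * (\<Prod>t<?r. T_entry M U ?p (i t) (i ((t+1) mod ?r)))) *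
        (of_nat (N^?p) * (\<Prod>s<?p. T_entry N (prime_bm N V) ?r (\<lambda>t. C t s) (\<lambda>t. C t ((s+1) mod ?p))))))"
  proof (rule sum.cong[OF refl], rule arg_cong[where f="\<lambda>x. ?c ^ ?r * x"], rule sum.cong[OF refl])
    fix i C assume i: "i \<in> ?IM" and C: "C \<in> ?IN"
    have "(\<Sum>K\<in>?IM. \<Prod>t<?r. \<Prod>s<?p. Ue i t (K t) s) =
        of_nat (M^?r) * (\<Prod>t<?r. T_entry M U ?p (i t) (i ((t+1) mod ?r)))"
      unfolding Ue_def by (rule Usum[OF M car]) (use i in \<open>auto simp: PiE_iff\<close>)
    moreover have "(\<Sum>a\<in>?IN. \<Prod>t<?r. \<Prod>s<?p. Ve a t (C t) s) =
        of_nat (N^?p) * (\<Prod>s<?p. T_entry N (prime_bm N V) ?r (\<lambda>t. C t s) (\<lambda>t. C t ((s+1) mod ?p)))"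
      unfolding Ve_def by (rule Vsum[OF N])
    ultimately show "(\<Prod>t<?r. \<Prod>s<?p. phi i t (C t) s) * (\<Sum>K\<in>?IM. \<Prod>t<?r. \<Prod>s<?p. Ue i t (K t) s) *
        (\<Sum>a\<in>?IN. \<Prod>t<?r. \<Prod>s<?p. Ve a t (C t) s) =
        (\<Prod>t<?r. \<Prod>s<?p. phi i t (C t) s) *
        (of_nat (M^?r) * (\<Prod>t<?r. T_entry M U ?p (i t) (i ((t+1) mod ?r)))) *
        (of_nat (N^?p) * (\<Prod>s<?p. T_entry N (prime_bm N V) ?r (\<lambda>t. C t s) (\<lambda>t. C t ((s+1) mod ?p))))"
      by simp
  qed
  finally have L: "c_pr (M*N) ?W ?p ?r = \<dots>" .
  show ?thesis unfolding L sum_distrib_left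
    by (intro sum.cong refl) (simp add: phi_def power_one_over mult_ac del: prod.lessThan_Suc)
qed

theorem lemma2p7:
  fixes M N p r :: nat
    and U V :: "nat \<Rightarrow> nat \<Rightarrow> complex mat"
    and Q :: "nat \<Rightarrow> nat \<Rightarrow> complex"
  assumes "projective_model M U"
    and "projective_model N V"
    and "\<forall>i<M. \<forall>c<N. cmod (Q i c) = 1"
    and "p \<ge> 1" and "r \<ge> 1"
  shows "c_pr (M*N) (qtensor M N Q U V) p r =
    1 / of_nat ((M*N)^r) *
    (\<Sum>i\<in>{..<r} \<rightarrow>\<^sub>E ({..<p} \<rightarrow>\<^sub>E {..<M}).
     \<Sum>b\<in>{..<r} \<rightarrow>\<^sub>E ({..<p} \<rightarrow>\<^sub>E {..<N}).
       (of_nat (M^r) * (\<Prod>t<r. T_entry M U p (i t) (i ((t+1) mod r)))) *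
       (of_nat (N^p) * (\<Prod>s<p. T_entry N (prime_bm N V) r
                              (\<lambda>t. b t s) (\<lambda>t. b t ((s+1) mod p)))) *
       (\<Prod>t<r. \<Prod>s<p.
          Q (i t s) (b t s) * Q (i ((t+1) mod r) s) (b t ((s+1) mod p)) /
          (Q (i t s) (b t ((s+1) mod p)) * Q (i ((t+1) mod r) s) (b t s))))"
proof -
  obtain m where p: "p = Suc m" using assms(4) by (cases p) auto
  obtain q where r: "r = Suc q" using assms(5) by (cases r) auto
  show ?thesis
  proof (cases "M = 0 \<or> N = 0")
    case True
    then have "M * N = 0" by auto
    have L: "c_pr (M*N) (qtensor M N Q U V) p r = 0"
      unfolding \<open>M*N = 0\<close> by (simp add: c_pr_def T_mat_def mtrace_def p)
    have R: "1 / of_nat ((M*N)^r) = (0::complex)" using \<open>M*N = 0\<close> r by simp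
    show ?thesis by (simp only: L R mult_zero_left)
  next
    case False
    then have M: "M > 0" and N: "N > 0" by auto
    have car: "\<And>i j. i < M \<Longrightarrow> j < M \<Longrightarrow> U i j \<in> carrier_mat M M"
      using assms(1) by (auto simp: projective_model_def magic_def orth_proj_def)
    show ?thesis unfolding p r by (rule main[OF M N car])
  qed
qed

end
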